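(* Let $Q$ be a quiver (no framing, arbitrary orientation) whose underlying graph is the affine Dynkin graph $\widetilde{A}_r$ (a cycle with $r+1$ vertices and $r+1$ edges; for $r=0$ a single loop), let $\beta=(n,\dots,n)$, and put the complete standard filtration at each vertex. Then $\mathbb{C}[\mathfrak{b}^{\oplus r+1}]^{\mathbb{U}_\beta}\cong\mathbb{C}[\mathfrak{t}^{\oplus r+1}]$, i.e. the invariant ring is the subalgebra generated by the diagonal entries of the $r+1$ matrices.
   Context: At each vertex put $\mathbb{C}^n$ with the flag $0\subset\mathbb{C}^1\subset\cdots\subset\mathbb{C}^n$ of standard coordinate subspaces; the filtered representation space is $\mathfrak{b}^{\oplus Q_1}$, tuples $(A_a)$ of upper triangular $n\times n$ matrices, one per arrow. $\mathbb{U}_\beta=U^{Q_0}$, $U$ the upper unitriangular $n\times n$ matrices, acting by $(u_i)\cdot(A_a)=(u_{h(a)}A_au_{t(a)}^{-1})$ with $h,t$ head and tail. $\mathfrak{t}$ denotes diagonal matrices. *)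

theory Defs
  imports Complex_Main "Jordan_Normal_Form.Gauss_Jordan_Elimination"
begin

inductive_set gen_alg :: "('x \<Rightarrow> complex) set \<Rightarrow> ('x \<Rightarrow> complex) set"
  for S :: "('x \<Rightarrow> complex) set" where
  const: "(\<lambda>_. c) \<in> gen_alg S"
| gen: "s \<in> S \<Longrightarrow> s \<in> gen_alg S"
| add: "f \<in> gen_alg S \<Longrightarrow> g \<in> gen_alg S \<Longrightarrow> (\<lambda>x. f x + g x) \<in> gen_alg S"
| mult: "f \<in> gen_alg S \<Longrightarrow> g \<in> gen_alg S \<Longrightarrow> (\<lambda>x. f x * g x) \<in> gen_alg S"

text \<open>Quiver whose underlying graph is the cycle affine A_r: vertices and arrows 0..r,
  arrow k joins k and (k+1) mod (r+1), with arbitrary orientation given by head hh / tail tt.\<close>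
definition cyclic_quiver :: "nat \<Rightarrow> (nat \<Rightarrow> nat) \<Rightarrow> (nat \<Rightarrow> nat) \<Rightarrow> bool" where
  "cyclic_quiver r hh tt \<longleftrightarrow> (\<forall>k\<le>r. {hh k, tt k} = {k, Suc k mod Suc r})"

definition bspace :: "nat \<Rightarrow> nat \<Rightarrow> (nat \<Rightarrow> complex mat) set" where
  "bspace r n = {A. \<forall>a\<le>r. A a \<in> carrier_mat n n \<and> upper_triangular (A a)}"

definition unitri :: "nat \<Rightarrow> complex mat set" where
  "unitri n = {u. u \<in> carrier_mat n n \<and> upper_triangular u \<and> (\<forall>i<n. u $$ (i,i) = 1)}"

definition Ugroup :: "nat \<Rightarrow> nat \<Rightarrow> (nat \<Rightarrow> complex mat) set" where
  "Ugroup r n = {u. \<forall>v\<le>r. u v \<in> unitri n}"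

definition minv :: "complex mat \<Rightarrow> complex mat" where
  "minv u = the (mat_inverse u)"

definition act :: "(nat \<Rightarrow> nat) \<Rightarrow> (nat \<Rightarrow> nat) \<Rightarrow> (nat \<Rightarrow> complex mat) \<Rightarrow> (nat \<Rightarrow> complex mat)
    \<Rightarrow> (nat \<Rightarrow> complex mat)" where
  "act hh tt u A = (\<lambda>a. u (hh a) * A a * minv (u (tt a)))"

definition coord_ring :: "nat \<Rightarrow> nat \<Rightarrow> ((nat \<Rightarrow> complex mat) \<Rightarrow> complex) set" where
  "coord_ring r n = gen_alg {(\<lambda>A. A a $$ (i,j)) | a i j. a \<le> r \<and> i \<le> j \<and> j < n}"

definition diag_alg :: "nat \<Rightarrow> nat \<Rightarrow> ((nat \<Rightarrow> complex mat) \<Rightarrow> complex) set" where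
  "diag_alg r n = gen_alg {(\<lambda>A. A a $$ (i,i)) | a i. a \<le> r \<and> i < n}"

definition invariant_ring :: "nat \<Rightarrow> nat \<Rightarrow> (nat \<Rightarrow> nat) \<Rightarrow> (nat \<Rightarrow> nat)
    \<Rightarrow> ((nat \<Rightarrow> complex mat) \<Rightarrow> complex) set" where
  "invariant_ring r n hh tt = {f \<in> coord_ring r n.
     \<forall>u\<in>Ugroup r n. \<forall>A\<in>bspace r n. f (act hh tt u A) = f A}"

end

theory Submission
  imports Defs "Jordan_Normal_Form.Determinant" "HOL-Computational_Algebra.Polynomial"
begin


lemma mult_entry:
  assumes "A \<in> carrier_mat n n" "B \<in> carrier_mat n n" "i < n" "j < n"
  shows "(A * B) $$ (i,j) = (\<Sum>k<n. A $$ (i,k) * B $$ (k,j))"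
  using assms by (auto simp: scalar_prod_def lessThan_atLeast0 intro!: sum.cong)

lemma sum_single:
  assumes "finite S" "j \<in> S" "\<And>k. k \<in> S \<Longrightarrow> k \<noteq> j \<Longrightarrow> f k = 0"
  shows "sum f S = f j"
proof -
  have "sum f S = f j + sum f (S - {j})" using assms sum.remove by metis
  also have "sum f (S - {j}) = 0" using assms by (intro sum.neutral) auto
  finally show ?thesis by simp
qed

lemma ut_mult:
  assumes A: "A \<in> carrier_mat n n" and B: "B \<in> carrier_mat n n"
    and uA: "upper_triangular A" and uB: "upper_triangular B"
  shows "upper_triangular (A * B)" "\<And>i. i < n \<Longrightarrow> (A*B) $$ (i,i) = A $$ (i,i) * B $$ (i,i)"
proof -
  show "upper_triangular (A * B)"
  proof
    fix i j assume ji: "j < i" and i: "i < dim_row (A*B)"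
    hence "i < n" using A by simp
    have "(A * B) $$ (i,j) = (\<Sum>k<n. A $$ (i,k) * B $$ (k,j))"
      using mult_entry[OF A B] ji \<open>i<n\<close> by simp
    also have "\<dots> = 0"
    proof (intro sum.neutral ballI)
      fix k assume "k \<in> {..<n}"
      show "A $$ (i,k) * B $$ (k,j) = 0"
      proof (cases "k < i")
        case True thus ?thesis using upper_triangularD[OF uA True] A \<open>i<n\<close> by auto
      next
        case False thus ?thesis using upper_triangularD[OF uB, of j k] B \<open>k \<in> {..<n}\<close> ji by auto
      qed
    qed
    finally show "(A * B) $$ (i,j) = 0" .
  qed
  fix i assume i: "i < n"
  have "(A * B) $$ (i,i) = (\<Sum>k<n. A $$ (i,k) * B $$ (k,i))"
    using mult_entry[OF A B] i by simp
  also have "\<dots> = A $$ (i,i) * B $$ (i,i)"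
  proof (rule sum_single)
    fix k assume k: "k \<in> {..<n}" "k \<noteq> i"
    show "A $$ (i,k) * B $$ (k,i) = 0"
    proof (cases "k < i")
      case True thus ?thesis using upper_triangularD[OF uA True] A i by auto
    next
      case False thus ?thesis using upper_triangularD[OF uB, of i k] B k by auto
    qed
  qed (use i in auto)
  finally show "(A*B) $$ (i,i) = A $$ (i,i) * B $$ (i,i)" .
qed

lemma unitri_inv:
  assumes u: "u \<in> unitri n"
  shows "minv u \<in> carrier_mat n n" "u * minv u = 1\<^sub>m n" "minv u * u = 1\<^sub>m n" "minv u \<in> unitri n"
proof -
  have uc: "u \<in> carrier_mat n n" and uu: "upper_triangular u" and ud: "\<And>i. i<n \<Longrightarrow> u $$ (i,i) = 1"
    using u unfolding unitri_def by auto
  have "det u = prod_list (diag_mat u)" by (rule det_upper_triangular[OF uu uc])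
  also have "\<dots> = 1"
  proof -
    have "diag_mat u = map (\<lambda>_. 1) [0..<n]" using uc ud unfolding diag_mat_def by auto
    thus ?thesis by (simp add: map_replicate_const)
  qed
  finally have d: "det u \<noteq> 0" by simp
  have U: "u \<in> Units (ring_mat TYPE(complex) n ())" by (rule det_non_zero_imp_unit[OF uc d])
  obtain w where mw: "mat_inverse u = Some w"
    using mat_inverse(1)[OF uc, of "()"] U by (cases "mat_inverse u") auto
  have ww: "minv u = w" unfolding minv_def mw by simp
  from mat_inverse(2)[OF uc mw] have uw: "u * w = 1\<^sub>m n" and wu: "w * u = 1\<^sub>m n" and wc: "w \<in> carrier_mat n n"
    by auto
  show "minv u \<in> carrier_mat n n" "u * minv u = 1\<^sub>m n" "minv u * u = 1\<^sub>m n" using ww uw wu wc by auto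
  have wl: "w $$ (i,j) = 0" if "j < i" "i < n" for i j
    using that
  proof (induction j rule: less_induct)
    case (less j)
    have "0 = (w * u) $$ (i,j)" using wu less by simp
    also have "\<dots> = (\<Sum>k<n. w $$ (i,k) * u $$ (k,j))" using mult_entry[OF wc uc] less by simp
    also have "\<dots> = w $$ (i,j) * u $$ (j,j)"
    proof (rule sum_single)
      fix k assume k: "k \<in> {..<n}" "k \<noteq> j"
      show "w $$ (i,k) * u $$ (k,j) = 0"
      proof (cases "k < j")
        case True thus ?thesis using less by auto
      next
        case False thus ?thesis using upper_triangularD[OF uu, of j k] uc k by auto
      qed
    qed (use less in auto)
    finally show ?case using ud less by simp
  qed
  have "w $$ (i,i) = 1" if "i < n" for i
  proof -
    have "1 = (w * u) $$ (i,i)" using wu that by simp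
    also have "\<dots> = (\<Sum>k<n. w $$ (i,k) * u $$ (k,i))" using mult_entry[OF wc uc] that by simp
    also have "\<dots> = w $$ (i,i) * u $$ (i,i)"
    proof (rule sum_single)
      fix k assume k: "k \<in> {..<n}" "k \<noteq> i"
      show "w $$ (i,k) * u $$ (k,i) = 0"
      proof (cases "k < i")
        case True thus ?thesis using wl that by auto
      next
        case False thus ?thesis using upper_triangularD[OF uu, of i k] uc k by auto
      qed
    qed (use that in auto)
    finally show ?thesis using ud that by simp
  qed
  thus "minv u \<in> unitri n" unfolding unitri_def ww using wc wl by auto
qed



lemma gen_alg_poly:
  assumes "f \<in> gen_alg S" "\<And>s. s \<in> S \<Longrightarrow> \<exists>p. \<forall>t. s (B t) = poly p t"
  shows "\<exists>p. \<forall>t. f (B t) = poly p t"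
  using assms(1)
proof (induction rule: gen_alg.induct)
  case (const c) show ?case by (rule exI[of _ "[:c:]"]) simp
next
  case (gen s) thus ?case using assms(2) by blast
next
  case (add f g)
  then obtain p q where "\<forall>t. f (B t) = poly p t" "\<forall>t. g (B t) = poly q t" by blast
  thus ?case by (intro exI[of _ "p + q"]) simp
next
  case (mult f g)
  then obtain p q where "\<forall>t. f (B t) = poly p t" "\<forall>t. g (B t) = poly q t" by blast
  thus ?case by (intro exI[of _ "p * q"]) simp
qed

lemma gen_alg_dep:
  assumes "f \<in> gen_alg S" "\<And>s. s \<in> S \<Longrightarrow> s X = s Y"
  shows "f X = f Y"
  using assms(1) by (induction rule: gen_alg.induct) (auto simp: assms(2))

lemma gen_alg_comp:
  assumes "f \<in> gen_alg S" "\<And>s. s \<in> S \<Longrightarrow> (\<lambda>x. s (\<phi> x)) \<in> gen_alg T"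
  shows "(\<lambda>x. f (\<phi> x)) \<in> gen_alg T"
  using assms(1)
proof (induction rule: gen_alg.induct)
  case (const c) show ?case by (rule gen_alg.const)
next
  case (gen s) thus ?case using assms(2) by blast
next
  case (add f g) thus ?case using gen_alg.add[of "\<lambda>x. f (\<phi> x)" T "\<lambda>x. g (\<phi> x)"] by simp
next
  case (mult f g) thus ?case using gen_alg.mult[of "\<lambda>x. f (\<phi> x)" T "\<lambda>x. g (\<phi> x)"] by simp
qed

fun mu :: "(nat \<Rightarrow> complex) \<Rightarrow> (nat \<Rightarrow> complex) \<Rightarrow> nat \<Rightarrow> complex" where
  "mu p q 0 = 1" | "mu p q (Suc k) = - p k * mu p q k / q k"
fun nu :: "(nat \<Rightarrow> complex) \<Rightarrow> (nat \<Rightarrow> complex) \<Rightarrow> (nat \<Rightarrow> complex) \<Rightarrow> nat \<Rightarrow> complex" where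
  "nu p q c 0 = 0" | "nu p q c (Suc k) = (c k - p k * nu p q c k) / q k"

lemma mu_prod: "(\<forall>i<k. q i \<noteq> 0) \<Longrightarrow> mu p q k * (\<Prod>i<k. q i) = (\<Prod>i<k. - p i)"
  by (induction k) (auto simp: field_simps)

lemma cyc_solve:
  fixes p q c :: "nat \<Rightarrow> complex"
  assumes q0: "\<forall>k<r. q k \<noteq> 0" and dt: "(\<Prod>k\<le>r. q k) \<noteq> (\<Prod>k\<le>r. - p k)"
  shows "\<exists>y. \<forall>k\<le>r. p k * y k + q k * y (Suc k mod Suc r) = c k"
proof -
  define d where "d = p r * mu p q r + q r"
  have "d \<noteq> 0"
  proof
    assume d0: "d = 0"
    have Q: "(\<Prod>i<r. q i) \<noteq> 0" using q0 by simp
    have "0 = d * (\<Prod>i<r. q i)" using d0 by simp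
    also have "\<dots> = p r * (\<Prod>i<r. - p i) + q r * (\<Prod>i<r. q i)"
      unfolding d_def using mu_prod[OF q0, of p] by (simp add: algebra_simps)
    also have "\<dots> = (\<Prod>k\<le>r. q k) - (\<Prod>k\<le>r. - p k)"
      by (simp add: lessThan_Suc_atMost[symmetric] algebra_simps)
    finally show False using dt by simp
  qed
  define y0 where "y0 = (c r - p r * nu p q c r) / d"
  define y where "y k = mu p q k * y0 + nu p q c k" for k
  show ?thesis
  proof (intro exI allI impI)
    fix k assume k: "k \<le> r"
    show "p k * y k + q k * y (Suc k mod Suc r) = c k"
    proof (cases "k < r")
      case True
      hence "Suc k mod Suc r = Suc k" by simp
      thus ?thesis using q0 True unfolding y_def by (simp add: field_simps)
    next
      case False
      hence "k = r" using k by simp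
      have "p r * y r + q r * y 0 = d * y0 + p r * nu p q c r"
        unfolding y_def d_def by (simp add: algebra_simps)
      also have "d * y0 = c r - p r * nu p q c r" unfolding y0_def using \<open>d \<noteq> 0\<close> by simp
      finally show ?thesis using \<open>k = r\<close> by simp
    qed
  qed
qed



definition pp :: "(nat\<Rightarrow>nat) \<Rightarrow> (nat \<Rightarrow> complex mat) \<Rightarrow> nat \<Rightarrow> nat \<Rightarrow> nat \<Rightarrow> complex" where
  "pp hh A i j k = (if hh k = k then A k $$ (j,j) else - A k $$ (i,i))"
definition qq :: "(nat\<Rightarrow>nat) \<Rightarrow> (nat \<Rightarrow> complex mat) \<Rightarrow> nat \<Rightarrow> nat \<Rightarrow> nat \<Rightarrow> complex" where
  "qq hh A i j k = (if hh k = k then - A k $$ (i,i) else A k $$ (j,j))"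
definition generic :: "nat \<Rightarrow> nat \<Rightarrow> (nat\<Rightarrow>nat) \<Rightarrow> (nat \<Rightarrow> complex mat) \<Rightarrow> bool" where
  "generic r n hh A \<longleftrightarrow> (\<forall>i j. i < j \<longrightarrow> j < n \<longrightarrow>
     (\<forall>k<r. qq hh A i j k \<noteq> 0) \<and> (\<Prod>k\<le>r. qq hh A i j k) \<noteq> (\<Prod>k\<le>r. - pp hh A i j k))"

definition Eqn :: "(nat\<Rightarrow>nat) \<Rightarrow> (nat\<Rightarrow>nat) \<Rightarrow> (nat\<Rightarrow>complex mat) \<Rightarrow> (nat\<Rightarrow>nat\<Rightarrow>nat\<Rightarrow>complex)
   \<Rightarrow> nat \<Rightarrow> nat \<Rightarrow> nat \<Rightarrow> bool" where
 "Eqn hh tt A X a i j \<longleftrightarrow> A a $$ (i,j) + (\<Sum>k\<in>{i<..<j}. X (hh a) i k * A a $$ (k,j))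
     + X (hh a) i j * A a $$ (j,j) = A a $$ (i,i) * X (tt a) i j"

definition diagpart :: "nat \<Rightarrow> (nat \<Rightarrow> complex mat) \<Rightarrow> (nat \<Rightarrow> complex mat)" where
  "diagpart n A = (\<lambda>a. mat n n (\<lambda>(i,j). if i = j then A a $$ (i,i) else 0))"

definition umat :: "nat \<Rightarrow> (nat\<Rightarrow>nat\<Rightarrow>nat\<Rightarrow>complex) \<Rightarrow> nat \<Rightarrow> complex mat" where
  "umat n X v = mat n n (\<lambda>(i,j). if i < j then X v i j else if i = j then 1 else 0)"

lemma orient:
  assumes "cyclic_quiver r hh tt" "k \<le> r"
  shows "(hh k = k \<and> tt k = Suc k mod Suc r) \<or> (hh k \<noteq> k \<and> hh k = Suc k mod Suc r \<and> tt k = k)"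
proof -
  have "{hh k, tt k} = {k, Suc k mod Suc r}" using assms unfolding cyclic_quiver_def by auto
  thus ?thesis by (auto simp: doubleton_eq_iff)
qed

lemma hh_le: assumes "cyclic_quiver r hh tt" "k \<le> r" shows "hh k \<le> r" "tt k \<le> r"
  using orient[OF assms] assms(2) by (auto simp: le_Suc_eq)

lemma cyc_eq:
  assumes "cyclic_quiver r hh tt" "k \<le> r"
  shows "y (hh k) * A k $$ (j,j) - A k $$ (i,i) * y (tt k)
     = pp hh A i j k * y k + qq hh A i j k * y (Suc k mod Suc r)"
  using orient[OF assms] unfolding pp_def qq_def by (auto simp: algebra_simps)

lemma col_exists:
  assumes cq: "cyclic_quiver r hh tt" and gen: "generic r n hh A"
  shows "\<exists>X. \<forall>a\<le>r. \<forall>i j. i < j \<longrightarrow> j < m \<longrightarrow> j < n \<longrightarrow> Eqn hh tt A X a i j"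
proof (induction m)
  case 0 show ?case by simp
next
  case (Suc m)
  then obtain X where X: "\<forall>a\<le>r. \<forall>i j. i < j \<longrightarrow> j < m \<longrightarrow> j < n \<longrightarrow> Eqn hh tt A X a i j" by blast
  show ?case
  proof (cases "m < n")
    case False
    thus ?thesis using X by (intro exI[of _ X]) auto
  next
    case mn: True
    define cc where "cc i a = - (A a $$ (i,m) + (\<Sum>k\<in>{i<..<m}. X (hh a) i k * A a $$ (k,m)))" for i a
    have "\<forall>i. \<exists>y. i < m \<longrightarrow> (\<forall>k\<le>r. pp hh A i m k * y k + qq hh A i m k * y (Suc k mod Suc r) = cc i k)"
    proof
      fix i
      show "\<exists>y. i < m \<longrightarrow> (\<forall>k\<le>r. pp hh A i m k * y k + qq hh A i m k * y (Suc k mod Suc r) = cc i k)"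
      proof (cases "i < m")
        case True
        with gen mn have "(\<forall>k<r. qq hh A i m k \<noteq> 0)" "(\<Prod>k\<le>r. qq hh A i m k) \<noteq> (\<Prod>k\<le>r. - pp hh A i m k)"
          unfolding generic_def by auto
        from cyc_solve[OF this, of "cc i"] show ?thesis by blast
      qed auto
    qed
    then obtain Y where Y: "\<And>i k. i < m \<Longrightarrow> k \<le> r \<Longrightarrow>
        pp hh A i m k * Y i k + qq hh A i m k * Y i (Suc k mod Suc r) = cc i k"
      by metis
    define X' where "X' v i j = (if j = m then Y i v else X v i j)" for v i j
    show ?thesis
    proof (intro exI[of _ X'] allI impI)
      fix a i j assume a: "a \<le> r" and ij: "i < j" "j < Suc m" "j < n"
      have S: "(\<Sum>k\<in>{i<..<j}. X' (hh a) i k * A a $$ (k,j)) = (\<Sum>k\<in>{i<..<j}. X (hh a) i k * A a $$ (k,j))"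
        using ij by (intro sum.cong) (auto simp: X'_def)
      show "Eqn hh tt A X' a i j"
      proof (cases "j = m")
        case False
        hence "j < m" using ij by simp
        thus ?thesis using X a ij S False unfolding Eqn_def X'_def by auto
      next
        case True
        have "Y i (hh a) * A a $$ (j,j) - A a $$ (i,i) * Y i (tt a) = cc i a"
          using cyc_eq[OF cq a, of "Y i" A j i] Y[of i a] True ij a by simp
        thus ?thesis using S True unfolding Eqn_def X'_def cc_def by (simp add: algebra_simps)
      qed
    qed
  qed
qed



lemma umat_unitri: "umat n X v \<in> unitri n"
  unfolding unitri_def umat_def by (auto intro!: upper_triangularI)

lemma mat_eq:
  assumes A: "A \<in> bspace r n" and a: "a \<le> r"
    and E: "\<forall>i j. i < j \<longrightarrow> j < n \<longrightarrow> Eqn hh tt A X a i j"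
  shows "umat n X (hh a) * A a = diagpart n A a * umat n X (tt a)"
proof -
  let ?U = "umat n X (hh a)" and ?V = "umat n X (tt a)" and ?B = "A a" and ?D = "diagpart n A a"
  have Bc: "?B \<in> carrier_mat n n" and Bu: "upper_triangular ?B" using A a unfolding bspace_def by auto
  have Uc: "?U \<in> carrier_mat n n" "?V \<in> carrier_mat n n" "?D \<in> carrier_mat n n"
    unfolding umat_def diagpart_def by auto
  have Bz: "?B $$ (k,j) = 0" if "j < k" "k < n" for k j using upper_triangularD[OF Bu that(1)] Bc that by auto
  show ?thesis
  proof (rule eq_matI)
    show "dim_row (?U * ?B) = dim_row (?D * ?V)" "dim_col (?U * ?B) = dim_col (?D * ?V)"
      using Uc Bc by auto
    fix i j assume "i < dim_row (?D * ?V)" "j < dim_col (?D * ?V)"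
    hence i: "i < n" and j: "j < n" using Uc by auto
    have R: "(?D * ?V) $$ (i,j) = ?B $$ (i,i) * ?V $$ (i,j)"
    proof -
      have "(?D * ?V) $$ (i,j) = (\<Sum>k<n. ?D $$ (i,k) * ?V $$ (k,j))" using mult_entry[OF Uc(3) Uc(2) i j] .
      also have "\<dots> = ?D $$ (i,i) * ?V $$ (i,j)"
        by (rule sum_single) (use i in \<open>auto simp: diagpart_def\<close>)
      finally show ?thesis using i by (simp add: diagpart_def)
    qed
    have L: "(?U * ?B) $$ (i,j) = (\<Sum>k<n. ?U $$ (i,k) * ?B $$ (k,j))" using mult_entry[OF Uc(1) Bc i j] .
    show "(?U * ?B) $$ (i,j) = (?D * ?V) $$ (i,j)"
    proof (cases "j < i")
      case True
      have "(\<Sum>k<n. ?U $$ (i,k) * ?B $$ (k,j)) = 0"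
      proof (intro sum.neutral ballI)
        fix k assume k: "k \<in> {..<n}"
        show "?U $$ (i,k) * ?B $$ (k,j) = 0"
        proof (cases "k < i")
          case True thus ?thesis using i k by (simp add: umat_def)
        next
          case False thus ?thesis using Bz[of j k] k \<open>j < i\<close> by auto
        qed
      qed
      thus ?thesis using L R True i j by (simp add: umat_def)
    next
      case False
      show ?thesis
      proof (cases "i = j")
        case True
        have "(\<Sum>k<n. ?U $$ (i,k) * ?B $$ (k,j)) = ?U $$ (i,i) * ?B $$ (i,j)"
        proof (rule sum_single)
          fix k assume k: "k \<in> {..<n}" "k \<noteq> i"
          show "?U $$ (i,k) * ?B $$ (k,j) = 0"
          proof (cases "k < i")
            case True thus ?thesis using i k by (simp add: umat_def)
          next
            case False thus ?thesis using Bz[of j k] k \<open>i = j\<close> by auto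
          qed
        qed (use i in auto)
        thus ?thesis using L R True i j by (simp add: umat_def)
      next
        case False
        hence ij: "i < j" using \<open>\<not> j < i\<close> by simp
        have "(\<Sum>k<n. ?U $$ (i,k) * ?B $$ (k,j)) = (\<Sum>k\<in>{i..j}. ?U $$ (i,k) * ?B $$ (k,j))"
        proof (rule sum.mono_neutral_right)
          show "{i..j} \<subseteq> {..<n}" using j by auto
          show "\<forall>k\<in>{..<n} - {i..j}. ?U $$ (i,k) * ?B $$ (k,j) = 0"
          proof
            fix k assume k: "k \<in> {..<n} - {i..j}"
            show "?U $$ (i,k) * ?B $$ (k,j) = 0"
            proof (cases "k < i")
              case True thus ?thesis using i k by (simp add: umat_def)
            next
              case False thus ?thesis using Bz[of j k] k by auto
            qed
          qed
        qed auto
        also have "{i..j} = insert i (insert j {i<..<j})" using ij by auto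
        also have "(\<Sum>k\<in>insert i (insert j {i<..<j}). ?U $$ (i,k) * ?B $$ (k,j))
            = ?U $$ (i,i) * ?B $$ (i,j) + (?U $$ (i,j) * ?B $$ (j,j) + (\<Sum>k\<in>{i<..<j}. ?U $$ (i,k) * ?B $$ (k,j)))"
          using ij by (simp add: sum.insert)
        also have "(\<Sum>k\<in>{i<..<j}. ?U $$ (i,k) * ?B $$ (k,j)) = (\<Sum>k\<in>{i<..<j}. X (hh a) i k * ?B $$ (k,j))"
          using j by (intro sum.cong) (auto simp: umat_def)
        finally have "(?U * ?B) $$ (i,j) = ?B $$ (i,j) + (\<Sum>k\<in>{i<..<j}. X (hh a) i k * ?B $$ (k,j)) + X (hh a) i j * ?B $$ (j,j)"
          using L i j ij by (simp add: umat_def)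
        also have "\<dots> = ?B $$ (i,i) * X (tt a) i j" using E ij j unfolding Eqn_def by auto
        finally show ?thesis using R i j ij by (simp add: umat_def)
      qed
    qed
  qed
qed

lemma orbit:
  assumes cq: "cyclic_quiver r hh tt" and A: "A \<in> bspace r n" and gen: "generic r n hh A"
  shows "\<exists>u\<in>Ugroup r n. \<forall>a\<le>r. act hh tt u A a = diagpart n A a"
proof -
  obtain X where X: "\<forall>a\<le>r. \<forall>i j. i < j \<longrightarrow> j < n \<longrightarrow> j < n \<longrightarrow> Eqn hh tt A X a i j"
    using col_exists[OF cq gen, of n] by blast
  define u where "u = umat n X"
  have "u \<in> Ugroup r n" unfolding Ugroup_def u_def using umat_unitri by auto
  moreover have "act hh tt u A a = diagpart n A a" if a: "a \<le> r" for a
  proof -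
    have Bc: "A a \<in> carrier_mat n n" using A a unfolding bspace_def by auto
    have Dc: "diagpart n A a \<in> carrier_mat n n" unfolding diagpart_def by auto
    have inv: "minv (u (tt a)) \<in> carrier_mat n n" "u (tt a) * minv (u (tt a)) = 1\<^sub>m n"
      using unitri_inv[OF umat_unitri[of n X "tt a"]] unfolding u_def by auto
    have Uc: "u (hh a) \<in> carrier_mat n n" "u (tt a) \<in> carrier_mat n n" unfolding u_def umat_def by auto
    have eq: "u (hh a) * A a = diagpart n A a * u (tt a)"
      unfolding u_def by (rule mat_eq[OF A a]) (use X a in auto)
    have "act hh tt u A a = (u (hh a) * A a) * minv (u (tt a))" unfolding act_def by simp
    also have "\<dots> = diagpart n A a * (u (tt a) * minv (u (tt a)))"
      unfolding eq using Dc Uc inv by (simp add: assoc_mult_mat)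
    also have "\<dots> = diagpart n A a" using inv Dc by simp
    finally show ?thesis .
  qed
  ultimately show ?thesis by blast
qed



definition wt :: "nat \<Rightarrow> nat \<Rightarrow> nat \<Rightarrow> complex" where
  "wt r a i = (if a < r then 1 else of_nat (Suc i))"

definition pert :: "nat \<Rightarrow> nat \<Rightarrow> (nat \<Rightarrow> complex mat) \<Rightarrow> complex \<Rightarrow> (nat \<Rightarrow> complex mat)" where
  "pert r n A t = (\<lambda>a. if a \<le> r then mat n n (\<lambda>(i,j). if i = j then A a $$ (i,i) + t * wt r a i else A a $$ (i,j)) else A a)"

lemma wt_nz: "wt r a i \<noteq> 0" unfolding wt_def by (simp del: of_nat_Suc)

lemma pert_entry: "a \<le> r \<Longrightarrow> i < n \<Longrightarrow> j < n \<Longrightarrow>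
   pert r n A t a $$ (i,j) = (if i = j then A a $$ (i,i) + t * wt r a i else A a $$ (i,j))"
  unfolding pert_def by simp

lemma pert_bspace: assumes "A \<in> bspace r n" shows "pert r n A t \<in> bspace r n"
  using assms unfolding bspace_def pert_def by (auto intro!: upper_triangularI) (metis upper_triangularD carrier_matD(1))

lemma pert_0: assumes "A \<in> bspace r n" shows "pert r n A 0 = A"
proof
  fix a show "pert r n A 0 a = A a"
  proof (cases "a \<le> r")
    case True
    hence "A a \<in> carrier_mat n n" using assms unfolding bspace_def by auto
    thus ?thesis using True unfolding pert_def by (auto intro!: eq_matI)
  qed (simp add: pert_def)
qed

lemma lc_lin: "w \<noteq> 0 \<Longrightarrow> lead_coeff [:c, w:] = w"
  by simp

lemma cancel_aux: "x * a = y * b \<Longrightarrow> x = y \<Longrightarrow> x \<noteq> (0::complex) \<Longrightarrow> a = b" by simp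

lemma generic_cofinite:
  assumes cq: "cyclic_quiver r hh tt"
  shows "finite {t. \<not> generic r n hh (pert r n A t)}"
proof -
  define PP where "PP i j k = (if hh k = k then [:A k $$ (j,j), wt r k j:] else - [:A k $$ (i,i), wt r k i:])" for i j k
  define QP where "QP i j k = (if hh k = k then - [:A k $$ (i,i), wt r k i:] else [:A k $$ (j,j), wt r k j:])" for i j k
  define DP where "DP i j = (\<Prod>k\<le>r. QP i j k) - (\<Prod>k\<le>r. - PP i j k)" for i j
  have ppe: "pp hh (pert r n A t) i j k = poly (PP i j k) t" if "k \<le> r" "i < n" "j < n" for i j k t
    using that unfolding pp_def PP_def by (simp add: pert_entry)
  have qqe: "qq hh (pert r n A t) i j k = poly (QP i j k) t" if "k \<le> r" "i < n" "j < n" for i j k t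
    using that unfolding qq_def QP_def by (simp add: pert_entry)
  have QP0: "QP i j k \<noteq> 0" for i j k
    unfolding QP_def using wt_nz by auto
  have lq: "lead_coeff (QP i j k) = (if hh k = k then - wt r k i else wt r k j)" for i j k
    unfolding QP_def using wt_nz by (simp add: lead_coeff_minus)
  have lp: "lead_coeff (- PP i j k) = (if hh k = k then - wt r k j else wt r k i)" for i j k
    unfolding PP_def using wt_nz by (simp add: lead_coeff_minus)
  have DP0: "DP i j \<noteq> 0" if ij: "i < j" for i j
  proof
    assume "DP i j = 0"
    hence "(\<Prod>k\<le>r. QP i j k) = (\<Prod>k\<le>r. - PP i j k)" unfolding DP_def by simp
    hence "lead_coeff (\<Prod>k\<le>r. QP i j k) = lead_coeff (\<Prod>k\<le>r. - PP i j k)" by simp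
    hence e: "(\<Prod>k\<le>r. lead_coeff (QP i j k)) = (\<Prod>k\<le>r. lead_coeff (- PP i j k))"
      by (simp add: lead_coeff_prod)
    have eqlt: "(\<Prod>k<r. lead_coeff (QP i j k)) = (\<Prod>k<r. lead_coeff (- PP i j k))"
    proof (intro prod.cong refl)
      fix k assume "k \<in> {..<r}"
      thus "lead_coeff (QP i j k) = lead_coeff (- PP i j k)" unfolding lq lp wt_def by simp
    qed
    have nz: "(\<Prod>k<r. lead_coeff (QP i j k)) \<noteq> 0" using QP0 by simp
    from e have "(\<Prod>k<r. lead_coeff (QP i j k)) * lead_coeff (QP i j r)
        = (\<Prod>k<r. lead_coeff (- PP i j k)) * lead_coeff (- PP i j r)"
      by (simp add: lessThan_Suc_atMost[symmetric])
    hence "lead_coeff (QP i j r) = lead_coeff (- PP i j r)" by (rule cancel_aux[OF _ eqlt nz])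
    thus False using ij unfolding lq lp wt_def by (auto split: if_splits)
  qed
  define Sbad where "Sbad i j = (if i < j then (\<Union>k<r. {t. poly (QP i j k) t = 0}) \<union> {t. poly (DP i j) t = 0} else {})" for i j
  have sub: "{t. \<not> generic r n hh (pert r n A t)} \<subseteq> (\<Union>i<n. \<Union>j<n. Sbad i j)"
  proof
    fix t assume "t \<in> {t. \<not> generic r n hh (pert r n A t)}"
    then obtain i j where ij: "i < j" "j < n" and
      bad: "\<not> ((\<forall>k<r. qq hh (pert r n A t) i j k \<noteq> 0) \<and>
        (\<Prod>k\<le>r. qq hh (pert r n A t) i j k) \<noteq> (\<Prod>k\<le>r. - pp hh (pert r n A t) i j k))"
      unfolding generic_def by blast
    have i: "i < n" using ij by simp
    have "(\<exists>k<r. poly (QP i j k) t = 0) \<or> poly (DP i j) t = 0"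
    proof (cases "\<forall>k<r. qq hh (pert r n A t) i j k \<noteq> 0")
      case True
      with bad have "(\<Prod>k\<le>r. qq hh (pert r n A t) i j k) = (\<Prod>k\<le>r. - pp hh (pert r n A t) i j k)" by simp
      also have "(\<Prod>k\<le>r. qq hh (pert r n A t) i j k) = (\<Prod>k\<le>r. poly (QP i j k) t)"
        using qqe i ij by (intro prod.cong) auto
      also have "(\<Prod>k\<le>r. - pp hh (pert r n A t) i j k) = (\<Prod>k\<le>r. - poly (PP i j k) t)"
        using ppe i ij by (intro prod.cong) auto
      finally show ?thesis unfolding DP_def by (simp add: poly_prod)
    next
      case False
      then obtain k where "k < r" "qq hh (pert r n A t) i j k = 0" by blast
      thus ?thesis using qqe[of k i j t] i ij by auto
    qed
    hence "t \<in> Sbad i j" unfolding Sbad_def using ij(1) by auto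
    thus "t \<in> (\<Union>i<n. \<Union>j<n. Sbad i j)" using ij(2) i by blast
  qed
  have fS: "finite (Sbad i j)" for i j
  proof (cases "i < j")
    case True
    have "finite (\<Union>k<r. {t. poly (QP i j k) t = 0})"
      by (intro finite_UN_I finite_lessThan poly_roots_finite QP0)
    moreover have "finite {t. poly (DP i j) t = 0}" by (intro poly_roots_finite DP0 True)
    ultimately show ?thesis unfolding Sbad_def using True by simp
  qed (simp add: Sbad_def)
  have "finite (\<Union>i<n. \<Union>j<n. Sbad i j)" by (intro finite_UN_I finite_lessThan fS)
  thus ?thesis using sub finite_subset by blast
qed


lemma diag_comp:
  assumes "f \<in> coord_ring r n"
  shows "(\<lambda>A. f (diagpart n A)) \<in> diag_alg r n"
  using assms unfolding coord_ring_def diag_alg_def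
proof (rule gen_alg_comp)
  fix s :: "(nat \<Rightarrow> complex mat) \<Rightarrow> complex"
  assume "s \<in> {(\<lambda>A. A a $$ (i,j)) | a i j. a \<le> r \<and> i \<le> j \<and> j < n}"
  then obtain a i j where s: "s = (\<lambda>A. A a $$ (i,j))" "a \<le> r" "i \<le> j" "j < n" by blast
  show "(\<lambda>x. s (diagpart n x)) \<in> gen_alg {(\<lambda>A. A a $$ (i,i)) | a i. a \<le> r \<and> i < n}"
  proof (cases "i = j")
    case True
    have "(\<lambda>x. s (diagpart n x)) = (\<lambda>A. A a $$ (i,i))" using s True by (auto simp: diagpart_def)
    thus ?thesis using s True by (auto intro!: gen_alg.gen)
  next
    case False
    have "(\<lambda>x. s (diagpart n x)) = (\<lambda>_. 0)" using s False by (auto simp: diagpart_def)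
    thus ?thesis by (simp add: gen_alg.const)
  qed
qed

lemma coord_dep:
  assumes "f \<in> coord_ring r n" "\<And>a i j. a \<le> r \<Longrightarrow> i \<le> j \<Longrightarrow> j < n \<Longrightarrow> X a $$ (i,j) = Y a $$ (i,j)"
  shows "f X = f Y"
  using assms(1) unfolding coord_ring_def
proof (rule gen_alg_dep)
  fix s :: "(nat \<Rightarrow> complex mat) \<Rightarrow> complex"
  assume "s \<in> {(\<lambda>A. A a $$ (i,j)) | a i j. a \<le> r \<and> i \<le> j \<and> j < n}"
  then obtain a i j where "s = (\<lambda>A. A a $$ (i,j))" "a \<le> r" "i \<le> j" "j < n" by blast
  thus "s X = s Y" using assms(2) by simp
qed

lemma diag_dep:
  assumes "g \<in> diag_alg r n" "\<And>a i. a \<le> r \<Longrightarrow> i < n \<Longrightarrow> X a $$ (i,i) = Y a $$ (i,i)"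
  shows "g X = g Y"
  using assms(1) unfolding diag_alg_def
proof (rule gen_alg_dep)
  fix s :: "(nat \<Rightarrow> complex mat) \<Rightarrow> complex"
  assume "s \<in> {(\<lambda>A. A a $$ (i,i)) | a i. a \<le> r \<and> i < n}"
  then obtain a i where "s = (\<lambda>A. A a $$ (i,i))" "a \<le> r" "i < n" by blast
  thus "s X = s Y" using assms(2) by simp
qed

lemma coord_poly:
  assumes "f \<in> coord_ring r n"
    and "\<And>a i j. a \<le> r \<Longrightarrow> i \<le> j \<Longrightarrow> j < n \<Longrightarrow> \<exists>p. \<forall>t. B t a $$ (i,j) = poly p t"
  shows "\<exists>p. \<forall>t. f (B t) = poly p t"
  using assms(1) unfolding coord_ring_def
proof (rule gen_alg_poly)
  fix s :: "(nat \<Rightarrow> complex mat) \<Rightarrow> complex"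
  assume "s \<in> {(\<lambda>A. A a $$ (i,j)) | a i j. a \<le> r \<and> i \<le> j \<and> j < n}"
  then obtain a i j where "s = (\<lambda>A. A a $$ (i,j))" "a \<le> r" "i \<le> j" "j < n" by blast
  thus "\<exists>p. \<forall>t. s (B t) = poly p t" using assms(2) by simp
qed

lemma main_fwd:
  assumes cq: "cyclic_quiver r hh tt" and f: "f \<in> invariant_ring r n hh tt" and A: "A \<in> bspace r n"
  shows "f A = f (diagpart n A)"
proof -
  have fc: "f \<in> coord_ring r n" and finv: "\<And>u B. u \<in> Ugroup r n \<Longrightarrow> B \<in> bspace r n \<Longrightarrow> f (act hh tt u B) = f B"
    using f unfolding invariant_ring_def by auto
  have ent: "\<exists>p. \<forall>t. pert r n A t a $$ (i,j) = poly p t" if "a \<le> r" "i \<le> j" "j < n" for a i j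
  proof (cases "i = j")
    case True thus ?thesis using that
      by (intro exI[of _ "[:A a $$ (i,i), wt r a i:]"]) (simp add: pert_entry algebra_simps)
  next
    case False thus ?thesis using that
      by (intro exI[of _ "[:A a $$ (i,j):]"]) (simp add: pert_entry)
  qed
  obtain p where p: "\<forall>t. f (pert r n A t) = poly p t" using coord_poly[OF fc, of "pert r n A"] ent by blast
  have ent2: "\<exists>p. \<forall>t. diagpart n (pert r n A t) a $$ (i,j) = poly p t" if "a \<le> r" "i \<le> j" "j < n" for a i j
  proof (cases "i = j")
    case True thus ?thesis using that
      by (intro exI[of _ "[:A a $$ (i,i), wt r a i:]"]) (simp add: diagpart_def pert_entry algebra_simps)
  next
    case False thus ?thesis using that
      by (intro exI[of _ "[:0:]"]) (simp add: diagpart_def)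
  qed
  obtain q where q: "\<forall>t. f (diagpart n (pert r n A t)) = poly q t"
    using coord_poly[OF fc, of "\<lambda>t. diagpart n (pert r n A t)"] ent2 by blast
  have zero: "poly (p - q) t = 0" if "t \<notin> {t. \<not> generic r n hh (pert r n A t)}" for t
  proof -
    have g: "generic r n hh (pert r n A t)" using that by simp
    have PB: "pert r n A t \<in> bspace r n" by (rule pert_bspace[OF A])
    obtain u where u: "u \<in> Ugroup r n" and ua: "\<forall>a\<le>r. act hh tt u (pert r n A t) a = diagpart n (pert r n A t) a"
      using orbit[OF cq PB g] by blast
    have "f (pert r n A t) = f (act hh tt u (pert r n A t))" using finv[OF u PB] by simp
    also have "\<dots> = f (diagpart n (pert r n A t))"
      by (rule coord_dep[OF fc]) (use ua in auto)
    finally show ?thesis using p q by simp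
  qed
  have "p - q = 0"
  proof (rule ccontr)
    assume "p - q \<noteq> 0"
    hence "finite {t. poly (p - q) t = 0}" by (rule poly_roots_finite)
    moreover have "- {t. \<not> generic r n hh (pert r n A t)} \<subseteq> {t. poly (p - q) t = 0}" using zero by auto
    ultimately have "finite (- {t. \<not> generic r n hh (pert r n A t)})" using finite_subset by blast
    with generic_cofinite[OF cq, of n A] have "finite ({t. \<not> generic r n hh (pert r n A t)} \<union> - {t. \<not> generic r n hh (pert r n A t)})"
      by (rule finite_UnI)
    moreover have "{t. \<not> generic r n hh (pert r n A t)} \<union> - {t. \<not> generic r n hh (pert r n A t)} = (UNIV :: complex set)"
      by blast
    ultimately have "finite (UNIV :: complex set)" by simp
    thus False using infinite_UNIV_char_0 by blast
  qed
  hence pq: "p = q" by simp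
  have "f A = f (pert r n A 0)" using pert_0[OF A] by simp
  also have "\<dots> = poly p 0" using p by simp
  also have "\<dots> = f (diagpart n (pert r n A 0))" using q pq by simp
  also have "\<dots> = f (diagpart n A)" using pert_0[OF A] by simp
  finally show ?thesis .
qed

lemma act_bspace:
  assumes cq: "cyclic_quiver r hh tt" and u: "u \<in> Ugroup r n" and A: "A \<in> bspace r n"
  shows "act hh tt u A \<in> bspace r n"
    "\<And>a i. a \<le> r \<Longrightarrow> i < n \<Longrightarrow> act hh tt u A a $$ (i,i) = A a $$ (i,i)"
proof -
  have key: "act hh tt u A a \<in> carrier_mat n n \<and> upper_triangular (act hh tt u A a) \<and>
     (\<forall>i<n. act hh tt u A a $$ (i,i) = A a $$ (i,i))" if a: "a \<le> r" for a
  proof -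
    have uall: "\<forall>v\<le>r. u v \<in> unitri n" using u unfolding Ugroup_def by simp
    have uh: "u (hh a) \<in> unitri n" using uall hh_le(1)[OF cq a] by blast
    have ut: "u (tt a) \<in> unitri n" using uall hh_le(2)[OF cq a] by blast
    have mi: "minv (u (tt a)) \<in> unitri n" using unitri_inv(4)[OF ut] .
    have Bc: "A a \<in> carrier_mat n n" and Bu: "upper_triangular (A a)" using A a unfolding bspace_def by auto
    have c1: "u (hh a) \<in> carrier_mat n n" "upper_triangular (u (hh a))" "\<And>i. i < n \<Longrightarrow> u (hh a) $$ (i,i) = 1"
      using uh unfolding unitri_def by auto
    have c2: "minv (u (tt a)) \<in> carrier_mat n n" "upper_triangular (minv (u (tt a)))" "\<And>i. i < n \<Longrightarrow> minv (u (tt a)) $$ (i,i) = 1"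
      using mi unfolding unitri_def by auto
    have P1c: "u (hh a) * A a \<in> carrier_mat n n" using c1 Bc by auto
    note P1 = ut_mult[OF c1(1) Bc c1(2) Bu]
    note P2 = ut_mult[OF P1c c2(1) P1(1) c2(2)]
    have e: "act hh tt u A a = (u (hh a) * A a) * minv (u (tt a))" unfolding act_def by simp
    have d: "act hh tt u A a $$ (i,i) = A a $$ (i,i)" if i: "i < n" for i
    proof -
      have "act hh tt u A a $$ (i,i) = (u (hh a) * A a) $$ (i,i) * minv (u (tt a)) $$ (i,i)"
        unfolding e by (rule P2(2)[OF i])
      also have "\<dots> = A a $$ (i,i)" using P1(2)[OF i] c1(3)[OF i] c2(3)[OF i] by simp
      finally show ?thesis .
    qed
    have "act hh tt u A a \<in> carrier_mat n n" unfolding e using P1c c2(1) by (rule mult_carrier_mat)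
    with P2(1) d show ?thesis unfolding e[symmetric] by blast
  qed
  show "act hh tt u A \<in> bspace r n" unfolding bspace_def using key by blast
  show "\<And>a i. a \<le> r \<Longrightarrow> i < n \<Longrightarrow> act hh tt u A a $$ (i,i) = A a $$ (i,i)" using key by blast
qed

theorem mainTheorem4:
  fixes r n :: nat and hh tt :: "nat \<Rightarrow> nat"
  assumes "cyclic_quiver r hh tt"
  shows "\<forall>f \<in> coord_ring r n.
           f \<in> invariant_ring r n hh tt \<longleftrightarrow>
           (\<exists>g \<in> diag_alg r n. \<forall>A \<in> bspace r n. f A = g A)"
proof (intro ballI iffI)
  fix f assume fc: "f \<in> coord_ring r n" and fi: "f \<in> invariant_ring r n hh tt"
  show "\<exists>g \<in> diag_alg r n. \<forall>A \<in> bspace r n. f A = g A"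
  proof (rule bexI[of _ "\<lambda>A. f (diagpart n A)"])
    show "(\<lambda>A. f (diagpart n A)) \<in> diag_alg r n" by (rule diag_comp[OF fc])
    show "\<forall>A\<in>bspace r n. f A = f (diagpart n A)" using main_fwd[OF assms fi] by simp
  qed
next
  fix f assume fc: "f \<in> coord_ring r n" and "\<exists>g \<in> diag_alg r n. \<forall>A \<in> bspace r n. f A = g A"
  then obtain g where g: "g \<in> diag_alg r n" and fg: "\<forall>A \<in> bspace r n. f A = g A" by blast
  show "f \<in> invariant_ring r n hh tt" unfolding invariant_ring_def
  proof (intro CollectI conjI ballI fc)
    fix u A assume u: "u \<in> Ugroup r n" and A: "A \<in> bspace r n"
    have "f (act hh tt u A) = g (act hh tt u A)" using fg act_bspace(1)[OF assms u A] by simp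
    also have "\<dots> = g A" by (rule diag_dep[OF g]) (use act_bspace(2)[OF assms u A] in auto)
    also have "\<dots> = f A" using fg A by simp
    finally show "f (act hh tt u A) = f A" .
  qed
qed


end
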